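(* Let $B_J\in\mathbb R^{n\times n}$ satisfy $\|B_J\|_1<1$ (strict diagonal dominance by columns), and let $\mathcal B$ be any splitting of $B_J$. Then $\rho(T(\mathcal B))<1$, so the associated iterative scheme converges.
   Context: For $B\in\mathbb R^{n\times n}$, a splitting of $B$ of order $d\ge1$ is an ordered $d$-tuple $\mathcal B=(B_1,\dots,B_d)$ of real $n\times n$ matrices with $B_p\neq O$ for all $p$, $\sum_{p=1}^d B_p=B$, and $B_p\circ B_q=O$ (Hadamard product) for $p\ne q$. The iteration matrix of $\mathcal B$ is the $dn\times dn$ matrix $T(\mathcal B)=(I_{dn}-\mathcal L)^{-1}\mathcal U$, where $\mathcal L,\mathcal U$ are $d\times d$ block matrices with $n\times n$ blocks, $\mathcal L_{ij}=B_j$ if $i>j$ and $O$ otherwise, $\mathcal U_{ij}=B_j$ if $i\le j$ and $O$ otherwise. $\rho$ is spectral radius, $\|\cdot\|_1$ the maximum-column-sum norm. *)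

theory Defs
  imports "Jordan_Normal_Form.Spectral_Radius" "Jordan_Normal_Form.Gauss_Jordan_Elimination"
begin

definition norm1_mat :: "real mat \<Rightarrow> real" where
  "norm1_mat A = Max ((\<lambda>j. \<Sum>i<dim_row A. \<bar>A $$ (i, j)\<bar>) ` {..<dim_col A})"

definition is_splitting :: "nat \<Rightarrow> real mat \<Rightarrow> nat \<Rightarrow> (nat \<Rightarrow> real mat) \<Rightarrow> bool" where
  "is_splitting n B d Bs \<longleftrightarrow>
     d \<ge> 1 \<and> B \<in> carrier_mat n n \<and>
     (\<forall>p<d. Bs p \<in> carrier_mat n n \<and> Bs p \<noteq> 0\<^sub>m n n) \<and>
     (\<forall>i<n. \<forall>j<n. (\<Sum>p<d. Bs p $$ (i, j)) = B $$ (i, j)) \<and>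
     (\<forall>p<d. \<forall>q<d. p \<noteq> q \<longrightarrow> (\<forall>i<n. \<forall>j<n. Bs p $$ (i, j) * Bs q $$ (i, j) = 0))"

text \<open>The dn x dn matrix built from d x d blocks of size n x n; block (I,J) is F I J.\<close>
definition block_mat :: "nat \<Rightarrow> nat \<Rightarrow> (nat \<Rightarrow> nat \<Rightarrow> real mat) \<Rightarrow> real mat" where
  "block_mat d n F = mat (d * n) (d * n) (\<lambda>(i, j). F (i div n) (j div n) $$ (i mod n, j mod n))"

definition split_L :: "nat \<Rightarrow> nat \<Rightarrow> (nat \<Rightarrow> real mat) \<Rightarrow> real mat" where
  "split_L n d Bs = block_mat d n (\<lambda>I J. if I > J then Bs J else 0\<^sub>m n n)"

definition split_U :: "nat \<Rightarrow> nat \<Rightarrow> (nat \<Rightarrow> real mat) \<Rightarrow> real mat" where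
  "split_U n d Bs = block_mat d n (\<lambda>I J. if I \<le> J then Bs J else 0\<^sub>m n n)"

text \<open>Iteration matrix T = (I - L)^{-1} U (I - L is unit block lower triangular, hence invertible).\<close>
definition iter_mat :: "nat \<Rightarrow> nat \<Rightarrow> (nat \<Rightarrow> real mat) \<Rightarrow> real mat" where
  "iter_mat n d Bs = the (mat_inverse (1\<^sub>m (d * n) - split_L n d Bs)) * split_U n d Bs"

definition real_spectral_radius :: "real mat \<Rightarrow> real" where
  "real_spectral_radius A = spectral_radius (map_mat complex_of_real A)"

end

theory Submission
  imports Defs
begin
lemma sum_split_blocks:
  fixes f :: "nat \<Rightarrow> 'a::comm_monoid_add"
  shows "(\<Sum>l<d*n. f l) = (\<Sum>J<d. \<Sum>j<n. f (J*n+j))"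
proof (induction d)
  case 0 then show ?case by simp
next
  case (Suc d)
  have "(\<Sum>l<Suc d*n. f l) = (\<Sum>l<d*n. f l) + (\<Sum>l\<in>{d*n..<d*n+n}. f l)"
    by (simp add: sum.atLeastLessThan_concat[symmetric] lessThan_atLeast0 add.commute)
  also have "(\<Sum>l\<in>{d*n..<d*n+n}. f l) = (\<Sum>j<n. f (d*n+j))"
  proof -
    have "{d*n..<d*n+n} = (\<lambda>j. d*n+j) ` {..<n}"
      by (simp add: lessThan_atLeast0 add.commute)
    then show ?thesis by (simp add: sum.reindex)
  qed
  finally show ?case using Suc by simp
qed

lemma split_abs_sum:
  assumes S: "is_splitting n B d Bs" and i: "i < n" and j: "j < n"
  shows "(\<Sum>p<d. \<bar>Bs p $$ (i,j)\<bar>) = \<bar>B $$ (i,j)\<bar>"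
proof (cases "\<forall>p<d. Bs p $$ (i,j) = 0")
  case True
  have "B $$ (i,j) = (\<Sum>p<d. Bs p $$ (i, j))" using S i j unfolding is_splitting_def by auto
  also have "\<dots> = 0" using True by simp
  finally show ?thesis using True by simp
next
  case False
  then obtain q where q: "q < d" "Bs q $$ (i,j) \<noteq> 0" by auto
  have z: "Bs p $$ (i,j) = 0" if "p < d" "p \<noteq> q" for p
    using S i j q that unfolding is_splitting_def by (metis mult_eq_0_iff)
  have "(\<Sum>p<d. \<bar>Bs p $$ (i,j)\<bar>) = \<bar>Bs q $$ (i,j)\<bar>"
    by (subst sum.mono_neutral_right[of "{..<d}" "{q}"]) (use q z in auto)  
  moreover have "(\<Sum>p<d. Bs p $$ (i,j)) = Bs q $$ (i,j)"
    by (subst sum.mono_neutral_right[of "{..<d}" "{q}"]) (use q z in auto)  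
  moreover have "B $$ (i,j) = (\<Sum>p<d. Bs p $$ (i, j))" using S i j unfolding is_splitting_def by auto
  ultimately show ?thesis by simp
qed

lemma colsum_le_norm1:
  assumes "B \<in> carrier_mat n n" "j < n"
  shows "(\<Sum>i<n. \<bar>B $$ (i,j)\<bar>) \<le> norm1_mat B"
  unfolding norm1_mat_def using assms by (intro Max_ge) auto

lemma block_idx:
  assumes "k < d*n" "l < d*n"
  shows "block_mat d n F $$ (k,l) = F (k div n) (l div n) $$ (k mod n, l mod n)"
  using assms unfolding block_mat_def by simp

theorem proposition4p2:
  fixes n d :: nat and BJ :: "real mat" and Bs :: "nat \<Rightarrow> real mat"
  assumes "BJ \<in> carrier_mat n n"
    and "norm1_mat BJ < 1"
    and "is_splitting n BJ d Bs"
  shows "real_spectral_radius (iter_mat n d Bs) < 1"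
proof -
  note S = assms(3)
  have d1: "d \<ge> 1" using S unfolding is_splitting_def by auto
  have Bc: "\<And>p. p < d \<Longrightarrow> Bs p \<in> carrier_mat n n" using S unfolding is_splitting_def by auto
  have n0: "n > 0"
  proof (rule ccontr)
    assume "\<not> n > 0" hence "n = 0" by simp
    with Bc[of 0] d1 have "Bs 0 = 0\<^sub>m n n" by auto
    with S d1 show False unfolding is_splitting_def by auto
  qed
  define N where "N = d * n"
  have N0: "N > 0" using n0 d1 unfolding N_def by simp
  define L where "L = split_L n d Bs"
  define U where "U = split_U n d Bs"
  define A where "A = 1\<^sub>m N - L"
  have Lc: "L \<in> carrier_mat N N" unfolding L_def split_L_def block_mat_def N_def by simp
  have Uc: "U \<in> carrier_mat N N" unfolding U_def split_U_def block_mat_def N_def by simp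
  have Ac: "A \<in> carrier_mat N N" unfolding A_def using Lc by (intro minus_carrier_mat) auto
  have Lidx: "L $$ (k,l) = (if k div n > l div n then Bs (l div n) $$ (k mod n, l mod n) else 0)"
    if "k < N" "l < N" for k l
    using that n0 unfolding L_def split_L_def N_def by (simp add: block_idx)
  have Uidx: "U $$ (k,l) = (if k div n \<le> l div n then Bs (l div n) $$ (k mod n, l mod n) else 0)"
    if "k < N" "l < N" for k l
    using that n0 unfolding U_def split_U_def N_def by (simp add: block_idx)
  have Aidx: "A $$ (k,l) = (if k = l then 1 else 0) - L $$ (k,l)" if "k < N" "l < N" for k l
    using that Lc unfolding A_def by simp
  have detA: "det A = 1"
  proof -
    have "det A = prod_list (diag_mat A)"
    proof (rule det_lower_triangular[OF _ Ac])
      fix i j assume "i < j" "j < N"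
      moreover have "i div n \<le> j div n" using \<open>i < j\<close> by (simp add: div_le_mono)
      ultimately show "A $$ (i,j) = 0" using Aidx Lidx by simp
    qed
    also have "diag_mat A = replicate N 1"
      using Ac Aidx Lidx by (intro nth_equalityI) (auto simp: diag_mat_def)
    finally show ?thesis by simp
  qed
  obtain Ainv where Ainv: "mat_inverse A = Some Ainv"
    using mat_inverse(1)[OF Ac] det_non_zero_imp_unit[OF Ac, of "()"] detA by fastforce
  from mat_inverse(2)[OF Ac Ainv]
  have AAinv: "A * Ainv = 1\<^sub>m N" and AinvC: "Ainv \<in> carrier_mat N N" by auto
  have T: "iter_mat n d Bs = Ainv * U"
    unfolding iter_mat_def using Ainv unfolding A_def L_def U_def N_def by simp
  define Tc where "Tc = map_mat complex_of_real (Ainv * U)"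
  have Tcc: "Tc \<in> carrier_mat N N" unfolding Tc_def using AinvC Uc by simp
  obtain ev where ev: "real_spectral_radius (iter_mat n d Bs) = norm ev" "ev \<in> spectrum Tc"
    using spectral_radius_mem_max(1)[OF Tcc N0] unfolding real_spectral_radius_def T Tc_def[symmetric]
    by auto
  show ?thesis
  proof (rule ccontr)
    assume "\<not> real_spectral_radius (iter_mat n d Bs) < 1"
    hence ev1: "norm ev \<ge> 1" using ev by simp
    from ev(2) obtain v where v: "v \<in> carrier_vec N" "v \<noteq> 0\<^sub>v N" "Tc *\<^sub>v v = ev \<cdot>\<^sub>v v"
      unfolding spectrum_def eigenvalue_def eigenvector_def using Tcc by auto
    let ?Ac = "map_mat complex_of_real A"
    let ?Uc = "map_mat complex_of_real U"
    have key: "?Uc *\<^sub>v v = ev \<cdot>\<^sub>v (?Ac *\<^sub>v v)"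
    proof -
      have "?Ac * Tc = map_mat complex_of_real (A * (Ainv * U))"
        unfolding Tc_def by (rule of_real_hom.mat_hom_mult[OF Ac, symmetric]) (use AinvC Uc in auto)
      also have "A * (Ainv*U) = U" using assoc_mult_mat[OF Ac AinvC Uc] AAinv Uc by simp
      finally have 1: "?Ac * Tc = ?Uc" .
      have "?Uc *\<^sub>v v = ?Ac *\<^sub>v (Tc *\<^sub>v v)"
        using assoc_mult_mat_vec[of ?Ac N N Tc N v] Ac Tcc v(1) 1 by simp
      also have "\<dots> = ev \<cdot>\<^sub>v (?Ac *\<^sub>v v)" using v(3) mult_mat_vec[of ?Ac N N v ev] Ac v(1) by simp
      finally show ?thesis .
    qed
    define SU where "SU k = (\<Sum>l<N. complex_of_real (U$$(k,l)) * v$l)" for k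
    define SL where "SL k = (\<Sum>l<N. complex_of_real (L$$(k,l)) * v$l)" for k
    have comp: "SU k = ev * (v$k - SL k)" if k: "k < N" for k
    proof -
      have 1: "(?Uc *\<^sub>v v) $ k = SU k" using Uc v(1) k unfolding SU_def
        by (simp add: scalar_prod_def lessThan_atLeast0)
      have "(?Ac *\<^sub>v v) $ k = (\<Sum>l<N. complex_of_real (A$$(k,l)) * v$l)" using Ac v(1) k
        by (simp add: scalar_prod_def lessThan_atLeast0)
      also have "\<dots> = (\<Sum>l<N. (if k = l then v$l else 0) - complex_of_real (L$$(k,l)) * v$l)"
        by (rule sum.cong) (auto simp: Aidx k algebra_simps)
      also have "\<dots> = v$k - SL k" unfolding SL_def using k by (simp add: sum_subtractf)
      finally have 2: "(?Ac *\<^sub>v v) $ k = v$k - SL k" .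
      have "(?Uc *\<^sub>v v) $ k = (ev \<cdot>\<^sub>v (?Ac *\<^sub>v v)) $ k" using key by simp
      then show ?thesis using 1 2 k Ac by simp
    qed
    define nB where "nB k l = \<bar>Bs (l div n) $$ (k mod n, l mod n)\<bar>" for k l
    have UL: "\<bar>U$$(k,l)\<bar> + \<bar>L$$(k,l)\<bar> = nB k l" if "k < N" "l < N" for k l
      using that unfolding nB_def by (simp add: Uidx Lidx)
    have bnd: "norm (v$k) \<le> (\<Sum>l<N. nB k l * norm (v$l))" if k: "k < N" for k
    proof -
      have e0: "norm ev > 0" using ev1 by linarith
      have hU: "norm (SU k) \<le> (\<Sum>l<N. \<bar>U$$(k,l)\<bar> * norm (v$l))" unfolding SU_def
        by (rule order_trans[OF norm_sum]) (simp add: norm_mult)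
      have hL: "norm (SL k) \<le> (\<Sum>l<N. \<bar>L$$(k,l)\<bar> * norm (v$l))" unfolding SL_def
        by (rule order_trans[OF norm_sum]) (simp add: norm_mult)
      have s0: "0 \<le> (\<Sum>l<N. \<bar>U$$(k,l)\<bar> * norm (v$l))" by (intro sum_nonneg) auto
      have "ev * v$k = SU k + ev * SL k" using comp[OF k] by (simp add: algebra_simps)
      hence "norm ev * norm (v$k) \<le> norm (SU k) + norm ev * norm (SL k)"
        by (metis norm_mult norm_triangle_ineq)
      also have "\<dots> \<le> norm ev * (\<Sum>l<N. \<bar>U$$(k,l)\<bar> * norm (v$l)) + norm ev * (\<Sum>l<N. \<bar>L$$(k,l)\<bar> * norm (v$l))"
      proof (rule add_mono)
        show "norm (SU k) \<le> norm ev * (\<Sum>l<N. \<bar>U$$(k,l)\<bar> * norm (v$l))"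
          using hU mult_right_mono[OF ev1 s0] by simp
        show "norm ev * norm (SL k) \<le> norm ev * (\<Sum>l<N. \<bar>L$$(k,l)\<bar> * norm (v$l))"
          using hL e0 by simp
      qed
      also have "\<dots> = norm ev * (\<Sum>l<N. nB k l * norm (v$l))"
        by (simp add: distrib_left[symmetric] sum.distrib[symmetric] distrib_right[symmetric] UL k)
      finally show ?thesis using e0 by simp
    qed
    define m where "m i = Max ((\<lambda>I. norm (v $ (I*n+i))) ` {..<d})" for i
    have m_ge: "norm (v $ (I*n+i)) \<le> m i" if "I < d" for I i
      unfolding m_def using that by (intro Max_ge) auto
    have m_nonneg: "0 \<le> m i" for i proof -
      have "norm (v $ (0*n+i)) \<le> m i" using d1 by (intro m_ge) simp
      then show ?thesis by (meson norm_ge_zero order_trans)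
    qed
    have idxN: "I*n+i < N" if "I < d" "i < n" for I i
    proof -
      have "I*n+i < I*n+n" using that by simp
      also have "\<dots> = Suc I * n" by simp
      also have "\<dots> \<le> d*n" using that by (intro mult_right_mono) auto
      finally show ?thesis unfolding N_def .
    qed
    have mb: "m i \<le> (\<Sum>j<n. \<bar>BJ$$(i,j)\<bar> * m j)" if i: "i < n" for i
    proof -
      have *: "norm (v $ (I*n+i)) \<le> (\<Sum>j<n. \<bar>BJ$$(i,j)\<bar> * m j)" if I: "I < d" for I
      proof -
      have "norm (v $ (I*n+i)) \<le> (\<Sum>l<N. nB (I*n+i) l * norm (v$l))" by (rule bnd[OF idxN[OF I i]])
      also have "\<dots> = (\<Sum>J<d. \<Sum>j<n. \<bar>Bs J $$ (i,j)\<bar> * norm (v $ (J*n+j)))"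
        unfolding N_def sum_split_blocks nB_def using i by (intro sum.cong refl) simp
      also have "\<dots> \<le> (\<Sum>J<d. \<Sum>j<n. \<bar>Bs J $$ (i,j)\<bar> * m j)"
        by (intro sum_mono mult_left_mono m_ge) auto
      also have "\<dots> = (\<Sum>j<n. \<Sum>J<d. \<bar>Bs J $$ (i,j)\<bar> * m j)"
        by (rule sum.swap)
      also have "\<dots> = (\<Sum>j<n. (\<Sum>J<d. \<bar>Bs J $$ (i,j)\<bar>) * m j)"
        by (simp only: sum_distrib_right)
      also have "\<dots> = (\<Sum>j<n. \<bar>BJ$$(i,j)\<bar> * m j)"
        using split_abs_sum[OF S i] by simp
      finally show ?thesis .
      qed
      show ?thesis unfolding m_def[of i]
      proof (rule Max.boundedI)
        show "finite ((\<lambda>I. norm (v $ (I*n+i))) ` {..<d})" by simp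
        have "0 \<in> {..<d}" using d1 by simp
        then show "(\<lambda>I. norm (v $ (I*n+i))) ` {..<d} \<noteq> {}" by blast
        fix a assume "a \<in> (\<lambda>I. norm (v $ (I*n+i))) ` {..<d}"
        then obtain I where "I < d" "a = norm (v $ (I*n+i))" by blast
        then show "a \<le> (\<Sum>j<n. \<bar>BJ$$(i,j)\<bar> * m j)" using * by simp
      qed
    qed
    define c where "c = norm1_mat BJ"
    define S where "S = (\<Sum>i<n. m i)"
    have "S \<le> (\<Sum>i<n. \<Sum>j<n. \<bar>BJ$$(i,j)\<bar> * m j)" unfolding S_def by (intro sum_mono mb) simp
    also have "\<dots> = (\<Sum>j<n. \<Sum>i<n. \<bar>BJ$$(i,j)\<bar> * m j)"
      by (rule sum.swap)
    also have "\<dots> = (\<Sum>j<n. (\<Sum>i<n. \<bar>BJ$$(i,j)\<bar>) * m j)"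
      by (simp only: sum_distrib_right)
    also have "\<dots> \<le> (\<Sum>j<n. c * m j)"
    proof (rule sum_mono)
      fix j assume "j \<in> {..<n}"
      hence "(\<Sum>i<n. \<bar>BJ$$(i,j)\<bar>) \<le> c" unfolding c_def by (intro colsum_le_norm1[OF assms(1)]) simp
      then show "(\<Sum>i<n. \<bar>BJ$$(i,j)\<bar>) * m j \<le> c * m j" by (rule mult_right_mono) (rule m_nonneg)
    qed
    also have "\<dots> = c * S" unfolding S_def by (simp only: sum_distrib_left)
    finally have Sle: "S \<le> c * S" .
    have c1: "c < 1" using assms(2) unfolding c_def .
    have S0: "S \<ge> 0" unfolding S_def by (intro sum_nonneg m_nonneg)
    have "S = 0"
    proof (rule ccontr)
      assume "S \<noteq> 0"
      with S0 have "S > 0" by linarith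
      from mult_strict_right_mono[OF c1 this] have "c * S < S" by simp
      with Sle show False by linarith
    qed
    hence m0: "m i = 0" if "i < n" for i
      using sum_nonneg_eq_0_iff[of "{..<n}" m] m_nonneg that unfolding S_def by simp
    have "v = 0\<^sub>v N"
    proof (rule eq_vecI)
      show "dim_vec v = dim_vec (0\<^sub>v N)" using v(1) by simp
      fix k assume "k < dim_vec (0\<^sub>v N)"
      hence k: "k < N" by simp
      have kd: "k div n < d" using k unfolding N_def by (rule less_mult_imp_div_less)
      have kk: "(k div n)*n + k mod n = k" by (rule div_mult_mod_eq)
      have "norm (v $ ((k div n)*n + k mod n)) \<le> m (k mod n)" by (rule m_ge[OF kd])
      also have "\<dots> = 0" using m0 n0 by simp
      finally have "v $ k = 0" unfolding kk by simp
      then show "v $ k = 0\<^sub>v N $ k" using k by simp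
    qed
    with v(2) show False by simp
  qed
qed
end
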